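(* Let $L$ be a non-trivial regular pseudocomplemented de Morgan algebra with dual $pm$-space $P$, and let $n<\omega$. Then $L$ is a simple algebra of $\mathbf{M}_n$ if and only if for all $x,y\in P$, $\ell(x,y)\le n$ or $\ell(x,\zeta(y))\le n$.
   Context: A $pm$-algebra is $(L;\wedge,\vee,{}^\ast,{}^\prime,0,1)$ with bounded distributive lattice reduct, pseudocomplement ${}^\ast$ and de Morgan involution ${}^\prime$; regular means any two congruences sharing a class are equal. $\mathbf{M}_n$ is the variety of regular $pm$-algebras satisfying $(x\wedge x^{\prime\ast})^{n(\prime\ast)}=(x\wedge x^{\prime\ast})^{(n+1)(\prime\ast)}$, where $x^{0(\prime\ast)}=x$, $x^{(k+1)(\prime\ast)}=((x^{k(\prime\ast)})')^\ast$. The dual $pm$-space is the Priestley space $(P;\tau,\le)$ of prime ideals with involution $\zeta(I)=\{a:a'\notin I\}$. $\ell(x,y)$ is the distance in the comparability graph of $(P;\le)$ ($0$ if $x=y$, $\infty$ if no path). *)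

theory Defs
  imports Main "HOL-Library.Extended_Nat"
begin

text \<open>A pm-algebra on the whole type 'a: bounded distributive lattice reduct
  (from the type class), a pseudocomplement ps and a de Morgan involution dm.\<close>

definition is_pseudocomplement :: "('a::{distrib_lattice,bounded_lattice} \<Rightarrow> 'a) \<Rightarrow> bool" where
  "is_pseudocomplement ps \<longleftrightarrow> (\<forall>a b. inf a b = bot \<longleftrightarrow> b \<le> ps a)"

definition is_de_morgan_op :: "('a::{distrib_lattice,bounded_lattice} \<Rightarrow> 'a) \<Rightarrow> bool" where
  "is_de_morgan_op dm \<longleftrightarrow> (\<forall>a b. dm (inf a b) = sup (dm a) (dm b)) \<and> (\<forall>a. dm (dm a) = a)"

definition pm_algebra :: "('a::{distrib_lattice,bounded_lattice} \<Rightarrow> 'a) \<Rightarrow> ('a \<Rightarrow> 'a) \<Rightarrow> bool" where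
  "pm_algebra ps dm \<longleftrightarrow> is_pseudocomplement ps \<and> is_de_morgan_op dm"

definition pm_congruence :: "('a::{distrib_lattice,bounded_lattice} \<Rightarrow> 'a) \<Rightarrow> ('a \<Rightarrow> 'a) \<Rightarrow> 'a rel \<Rightarrow> bool" where
  "pm_congruence ps dm \<theta> \<longleftrightarrow> equiv UNIV \<theta> \<and>
     (\<forall>a b c d. (a, b) \<in> \<theta> \<longrightarrow> (c, d) \<in> \<theta> \<longrightarrow>
        (inf a c, inf b d) \<in> \<theta> \<and> (sup a c, sup b d) \<in> \<theta>) \<and>
     (\<forall>a b. (a, b) \<in> \<theta> \<longrightarrow> (ps a, ps b) \<in> \<theta> \<and> (dm a, dm b) \<in> \<theta>)"

definition pm_regular :: "('a::{distrib_lattice,bounded_lattice} \<Rightarrow> 'a) \<Rightarrow> ('a \<Rightarrow> 'a) \<Rightarrow> bool" where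
  "pm_regular ps dm \<longleftrightarrow> (\<forall>\<theta> \<phi>. pm_congruence ps dm \<theta> \<longrightarrow> pm_congruence ps dm \<phi> \<longrightarrow>
      (\<exists>a. \<theta> `` {a} = \<phi> `` {a}) \<longrightarrow> \<theta> = \<phi>)"

definition pm_simple :: "('a::{distrib_lattice,bounded_lattice} \<Rightarrow> 'a) \<Rightarrow> ('a \<Rightarrow> 'a) \<Rightarrow> bool" where
  "pm_simple ps dm \<longleftrightarrow> (\<exists>a b::'a. a \<noteq> b) \<and>
     (\<forall>\<theta>. pm_congruence ps dm \<theta> \<longrightarrow> \<theta> = Id \<or> \<theta> = UNIV)"

text \<open>x^{k('*)}: k-fold iteration of x \<mapsto> (x')^*.\<close>

definition pm_iter :: "('a \<Rightarrow> 'a) \<Rightarrow> ('a \<Rightarrow> 'a) \<Rightarrow> nat \<Rightarrow> 'a \<Rightarrow> 'a" where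
  "pm_iter ps dm k = (\<lambda>y. ps (dm y)) ^^ k"

definition in_M :: "nat \<Rightarrow> ('a::{distrib_lattice,bounded_lattice} \<Rightarrow> 'a) \<Rightarrow> ('a \<Rightarrow> 'a) \<Rightarrow> bool" where
  "in_M n ps dm \<longleftrightarrow> pm_algebra ps dm \<and> pm_regular ps dm \<and>
     (\<forall>x. pm_iter ps dm n (inf x (ps (dm x))) = pm_iter ps dm (Suc n) (inf x (ps (dm x))))"

text \<open>Prime ideals (points of the dual Priestley space), ordered by inclusion.\<close>

definition prime_ideal :: "'a::{distrib_lattice,bounded_lattice} set \<Rightarrow> bool" where
  "prime_ideal I \<longleftrightarrow> I \<noteq> {} \<and> top \<notin> I \<and>
     (\<forall>a b. a \<in> I \<longrightarrow> b \<le> a \<longrightarrow> b \<in> I) \<and>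
     (\<forall>a b. a \<in> I \<longrightarrow> b \<in> I \<longrightarrow> sup a b \<in> I) \<and>
     (\<forall>a b. inf a b \<in> I \<longrightarrow> a \<in> I \<or> b \<in> I)"

definition dual_space :: "'a::{distrib_lattice,bounded_lattice} set set" where
  "dual_space = {I. prime_ideal I}"

definition zeta :: "('a \<Rightarrow> 'a) \<Rightarrow> 'a set \<Rightarrow> 'a set" where
  "zeta dm I = {a. dm a \<notin> I}"

definition comp_walk :: "'b set \<Rightarrow> ('b \<Rightarrow> 'b \<Rightarrow> bool) \<Rightarrow> 'b \<Rightarrow> 'b \<Rightarrow> nat \<Rightarrow> bool" where
  "comp_walk P le x y k \<longleftrightarrow> (\<exists>f::nat \<Rightarrow> 'b. f 0 = x \<and> f k = y \<and> (\<forall>i\<le>k. f i \<in> P) \<and>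
      (\<forall>i<k. f i \<noteq> f (Suc i) \<and> (le (f i) (f (Suc i)) \<or> le (f (Suc i)) (f i))))"

definition ell :: "'b set \<Rightarrow> ('b \<Rightarrow> 'b \<Rightarrow> bool) \<Rightarrow> 'b \<Rightarrow> 'b \<Rightarrow> enat" where
  "ell P le x y = (if \<exists>k. comp_walk P le x y k
                   then enat (LEAST k. comp_walk P le x y k) else \<infinity>)"

end

theory Submission
  imports Defs
begin



locale pmalg =
  fixes ps dm :: "'a::{distrib_lattice,bounded_lattice} \<Rightarrow> 'a"
  assumes pm: "pm_algebra ps dm"
begin

lemma ps_iff: "inf a b = bot \<longleftrightarrow> b \<le> ps a"
  using pm unfolding pm_algebra_def is_pseudocomplement_def by blast

lemma dm_inf: "dm (inf a b) = sup (dm a) (dm b)"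
  using pm unfolding pm_algebra_def is_de_morgan_op_def by blast

lemma dm_dm[simp]: "dm (dm a) = a"
  using pm unfolding pm_algebra_def is_de_morgan_op_def by blast

lemma dm_inj: "dm a = dm b \<Longrightarrow> a = b"
  by (metis dm_dm)

lemma inf_ps[simp]: "inf a (ps a) = bot"
  using ps_iff by blast

lemma inf_ps2[simp]: "inf (ps a) a = bot"
  using inf_ps by (metis inf.commute)

lemma ps_anti: "a \<le> b \<Longrightarrow> ps b \<le> ps a"
proof -
  assume "a \<le> b"
  have "inf b (ps b) = bot" by simp
  then have "inf a (ps b) = bot" using \<open>a \<le> b\<close>
    by (metis inf.absorb_iff2 inf.commute inf.left_commute inf_bot_right)
  then show ?thesis using ps_iff by blast
qed

lemma dm_anti: "a \<le> b \<Longrightarrow> dm b \<le> dm a"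
  by (metis dm_inf inf.absorb1 sup.cobounded2)

lemma dm_le_iff: "dm a \<le> dm b \<longleftrightarrow> b \<le> a"
  by (metis dm_anti dm_dm)

lemma dm_sup: "dm (sup a b) = inf (dm a) (dm b)"
  by (metis dm_dm dm_inf)

lemma dm_bot[simp]: "dm bot = top"
  by (metis dm_anti dm_dm bot_least top.extremum_uniqueI)

lemma dm_top[simp]: "dm top = bot"
  by (metis dm_bot dm_dm)

lemma ps_bot[simp]: "ps bot = top"
  using ps_iff by (metis inf_bot_left top.extremum_uniqueI)

lemma ps_top[simp]: "ps top = bot"
  by (metis inf_ps inf_top_left)

lemma ps_eq_top: "ps a = top \<Longrightarrow> a = bot"
  by (metis inf_ps inf_top_right)

lemma ps_sup: "ps (sup a b) = inf (ps a) (ps b)"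
proof (rule order.antisym)
  show "ps (sup a b) \<le> inf (ps a) (ps b)" by (simp add: ps_anti)
  have "inf (sup a b) (inf (ps a) (ps b)) = bot"
    by (metis (no_types, lifting) inf_ps inf_sup_distrib2 inf.left_commute inf_bot_right
        inf.commute sup_bot.right_neutral)
  then show "inf (ps a) (ps b) \<le> ps (sup a b)" using ps_iff by blast
qed

lemma ps_eq_inf: "ps a = ps b \<Longrightarrow> ps (inf a c) = ps (inf b c)"
proof -
  assume h: "ps a = ps b"
  have "\<And>z. z \<le> ps (inf a c) \<longleftrightarrow> z \<le> ps (inf b c)"
  proof -
    fix z
    have "z \<le> ps (inf a c) \<longleftrightarrow> inf a (inf c z) = bot" using ps_iff by (metis inf.assoc)
    also have "\<dots> \<longleftrightarrow> inf c z \<le> ps a" by (rule ps_iff)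
    also have "\<dots> \<longleftrightarrow> inf b (inf c z) = bot" unfolding h by (rule ps_iff[symmetric])
    also have "\<dots> \<longleftrightarrow> z \<le> ps (inf b c)" using ps_iff by (metis inf.assoc)
    finally show "z \<le> ps (inf a c) \<longleftrightarrow> z \<le> ps (inf b c)" .
  qed
  then show ?thesis by (meson order.antisym order.refl)
qed

definition f :: "'a \<Rightarrow> 'a" where "f a = ps (dm a)"

lemma f_mono: "a \<le> b \<Longrightarrow> f a \<le> f b"
  unfolding f_def by (simp add: dm_anti ps_anti)

lemma fpow_mono: "a \<le> b \<Longrightarrow> (f ^^ k) a \<le> (f ^^ k) b"
  by (induction k) (auto simp: f_mono)

lemma f_top[simp]: "f top = top" unfolding f_def by simp
lemma f_bot[simp]: "f bot = bot" unfolding f_def by simp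

lemma fpow_top[simp]: "(f ^^ k) top = top" by (induction k) auto
lemma fpow_bot[simp]: "(f ^^ k) bot = bot" by (induction k) auto

lemma f_eq_top: "f a = top \<Longrightarrow> a = top"
  unfolding f_def by (metis ps_eq_top dm_dm dm_bot)

lemma fpow_eq_top: "(f ^^ k) a = top \<Longrightarrow> a = top"
  by (induction k) (auto dest: f_eq_top)

definition g :: "'a \<Rightarrow> 'a" where "g c = inf c (f c)"

lemma g_mono: "a \<le> b \<Longrightarrow> g a \<le> g b"
  unfolding g_def using f_mono by (meson inf_mono)

lemma g_top[simp]: "g top = top" unfolding g_def by simp

lemma g_eq_top: "g c = top \<Longrightarrow> c = top"
  unfolding g_def by (metis inf_eq_top_iff)

end



definition is_ideal :: "'a::{distrib_lattice,bounded_lattice} set \<Rightarrow> bool" where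
  "is_ideal J \<longleftrightarrow> J \<noteq> {} \<and> (\<forall>a b. a \<in> J \<longrightarrow> b \<le> a \<longrightarrow> b \<in> J) \<and> (\<forall>a b. a \<in> J \<longrightarrow> b \<in> J \<longrightarrow> sup a b \<in> J)"

definition is_filter :: "'a::{distrib_lattice,bounded_lattice} set \<Rightarrow> bool" where
  "is_filter F \<longleftrightarrow> F \<noteq> {} \<and> (\<forall>a b. a \<in> F \<longrightarrow> a \<le> b \<longrightarrow> b \<in> F) \<and> (\<forall>a b. a \<in> F \<longrightarrow> b \<in> F \<longrightarrow> inf a b \<in> F)"

lemma PIT:
  fixes I F :: "'a::{distrib_lattice,bounded_lattice} set"
  assumes I: "is_ideal I" and F: "is_filter F" and disj: "I \<inter> F = {}"
  shows "\<exists>P. prime_ideal P \<and> I \<subseteq> P \<and> P \<inter> F = {}"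
proof -
  define A where "A = {J. is_ideal J \<and> I \<subseteq> J \<and> J \<inter> F = {}}"
  have "\<forall>C\<in>chains A. \<exists>U\<in>A. \<forall>X\<in>C. X \<subseteq> U"
  proof
    fix C assume C: "C \<in> chains A"
    show "\<exists>U\<in>A. \<forall>X\<in>C. X \<subseteq> U"
    proof (cases "C = {}")
      case True then show ?thesis using I disj unfolding A_def by auto
    next
      case False
      have CA: "C \<subseteq> A" and ch: "\<forall>X\<in>C. \<forall>Y\<in>C. X \<subseteq> Y \<or> Y \<subseteq> X"
        using C unfolding chains_def chain_subset_def by auto
      have "is_ideal (\<Union>C)"
        unfolding is_ideal_def
      proof (intro conjI allI impI)
        obtain X where "X \<in> C" using False by auto
        then have "X \<noteq> {}" using CA unfolding A_def is_ideal_def by auto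
        then show "\<Union>C \<noteq> {}" using \<open>X \<in> C\<close> by auto
      next
        fix a b assume "a \<in> \<Union>C" "b \<le> a" then show "b \<in> \<Union>C"
          using CA unfolding A_def is_ideal_def by blast
      next
        fix a b assume a: "a \<in> \<Union>C" and b: "b \<in> \<Union>C"
        then obtain X Y where X: "X \<in> C" "a \<in> X" and Y: "Y \<in> C" "b \<in> Y" by auto
        from ch X Y have "X \<subseteq> Y \<or> Y \<subseteq> X" by auto
        then show "sup a b \<in> \<Union>C"
        proof
          assume "X \<subseteq> Y"
          then have "sup a b \<in> Y" using X Y CA unfolding A_def is_ideal_def by blast
          then show ?thesis using Y by auto
        next
          assume "Y \<subseteq> X"
          then have "sup a b \<in> X" using X Y CA unfolding A_def is_ideal_def by blast
          then show ?thesis using X by auto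
        qed
      qed
      moreover have "I \<subseteq> \<Union>C" using False CA unfolding A_def by auto
      moreover have "\<Union>C \<inter> F = {}" using CA unfolding A_def by auto
      ultimately show ?thesis unfolding A_def by auto
    qed
  qed
  then obtain M where MA: "M \<in> A" and Mmax: "\<forall>X\<in>A. M \<subseteq> X \<longrightarrow> X = M"
    using Zorn_Lemma2[of A] by blast
  have Mid: "is_ideal M" and IM: "I \<subseteq> M" and MF: "M \<inter> F = {}" using MA unfolding A_def by auto
  have topF: "top \<in> F" using F unfolding is_filter_def by auto
  have gen: "\<exists>m\<in>M. \<exists>z\<in>F. z \<le> sup m c" if c: "c \<notin> M" for c
  proof (rule ccontr)
    assume nc: "\<not> ?thesis"
    define M2 where "M2 = {z. \<exists>m\<in>M. z \<le> sup m c}"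
    have "is_ideal M2" unfolding is_ideal_def M2_def
    proof (intro conjI allI impI)
      show "{z. \<exists>m\<in>M. z \<le> sup m c} \<noteq> {}" using Mid unfolding is_ideal_def by auto
    next
      fix a b assume "a \<in> {z. \<exists>m\<in>M. z \<le> sup m c}" "b \<le> a"
      then show "b \<in> {z. \<exists>m\<in>M. z \<le> sup m c}" by (auto intro: order.trans)
    next
      fix a b assume "a \<in> {z. \<exists>m\<in>M. z \<le> sup m c}" "b \<in> {z. \<exists>m\<in>M. z \<le> sup m c}"
      then obtain m1 m2 where "m1 \<in> M" "a \<le> sup m1 c" "m2 \<in> M" "b \<le> sup m2 c" by auto
      moreover have "sup m1 m2 \<in> M" using Mid \<open>m1 \<in> M\<close> \<open>m2 \<in> M\<close> unfolding is_ideal_def by blast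
      moreover have "sup a b \<le> sup (sup m1 m2) c" using calculation
        by (meson le_sup_iff sup_ge1 sup_ge2 order.trans)
      ultimately show "sup a b \<in> {z. \<exists>m\<in>M. z \<le> sup m c}" by blast
    qed
    moreover have "I \<subseteq> M2" using IM unfolding M2_def by force
    moreover have "M2 \<inter> F = {}"
    proof -
      { fix z assume "z \<in> M2" "z \<in> F"
        then obtain m where "m \<in> M" "z \<le> sup m c" unfolding M2_def by auto
        then have False using nc \<open>z \<in> F\<close> by blast }
      then show ?thesis by blast
    qed
    ultimately have "M2 \<in> A" unfolding A_def by auto
    moreover have "M \<subseteq> M2" unfolding M2_def by force
    ultimately have "M2 = M" using Mmax by blast
    moreover have "c \<in> M2" unfolding M2_def using Mid unfolding is_ideal_def by force
    ultimately show False using c by simp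
  qed
  have "prime_ideal M"
    unfolding prime_ideal_def
  proof (intro conjI allI impI)
    show "M \<noteq> {}" using Mid unfolding is_ideal_def by auto
    show "top \<notin> M" using MF topF by auto
  next
    fix a b assume "a \<in> M" "b \<le> a" then show "b \<in> M" using Mid unfolding is_ideal_def by blast
  next
    fix a b assume "a \<in> M" "b \<in> M" then show "sup a b \<in> M" using Mid unfolding is_ideal_def by blast
  next
    fix a b assume ab: "inf a b \<in> M"
    show "a \<in> M \<or> b \<in> M"
    proof (rule ccontr)
      assume "\<not> (a \<in> M \<or> b \<in> M)"
      then have "a \<notin> M" "b \<notin> M" by auto
      then obtain m1 z1 m2 z2 where "m1 \<in> M" "z1 \<in> F" "z1 \<le> sup m1 a" "m2 \<in> M" "z2 \<in> F" "z2 \<le> sup m2 b"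
        using gen by meson
      have "inf z1 z2 \<in> F" using F \<open>z1 \<in> F\<close> \<open>z2 \<in> F\<close> unfolding is_filter_def by blast
      have "inf z1 z2 \<le> inf (sup m1 a) (sup m2 b)" using \<open>z1 \<le> _\<close> \<open>z2 \<le> _\<close> by (rule inf_mono)
      also have "\<dots> \<le> sup (sup m1 m2) (inf a b)"
        by (simp add: inf_sup_distrib1 inf_sup_distrib2 le_supI1 le_supI2 inf.coboundedI1 inf.coboundedI2)
      finally have le: "inf z1 z2 \<le> sup (sup m1 m2) (inf a b)" .
      have "sup (sup m1 m2) (inf a b) \<in> M" using Mid \<open>m1 \<in> M\<close> \<open>m2 \<in> M\<close> ab unfolding is_ideal_def by blast
      then have "inf z1 z2 \<in> M" using le Mid unfolding is_ideal_def by blast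
      then show False using MF \<open>inf z1 z2 \<in> F\<close> by auto
    qed
  qed
  then show ?thesis using IM MF by blast
qed

lemma prime_sep:
  fixes a b :: "'a::{distrib_lattice,bounded_lattice}"
  assumes "\<not> a \<le> b"
  shows "\<exists>P. prime_ideal P \<and> b \<in> P \<and> a \<notin> P"
proof -
  have "is_ideal {z. z \<le> b}" unfolding is_ideal_def by (auto intro: order.trans)
  moreover have "is_filter {z. a \<le> z}" unfolding is_filter_def by (auto intro: order.trans)
  moreover have "{z. z \<le> b} \<inter> {z. a \<le> z} = {}" using assms by (auto intro: order.trans)
  ultimately obtain P where "prime_ideal P" "{z. z \<le> b} \<subseteq> P" "P \<inter> {z. a \<le> z} = {}"
    using PIT by blast
  then show ?thesis by auto
qed

lemma prime_down: "prime_ideal P \<Longrightarrow> a \<in> P \<Longrightarrow> b \<le> a \<Longrightarrow> b \<in> P"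
  unfolding prime_ideal_def by blast
lemma prime_sup: "prime_ideal P \<Longrightarrow> a \<in> P \<Longrightarrow> b \<in> P \<Longrightarrow> sup a b \<in> P"
  unfolding prime_ideal_def by blast
lemma prime_inf: "prime_ideal P \<Longrightarrow> inf a b \<in> P \<Longrightarrow> a \<in> P \<or> b \<in> P"
  unfolding prime_ideal_def by blast
lemma prime_top: "prime_ideal P \<Longrightarrow> top \<notin> P"
  unfolding prime_ideal_def by blast
lemma prime_bot: "prime_ideal P \<Longrightarrow> bot \<in> P"
  unfolding prime_ideal_def by (metis all_not_in_conv bot.extremum)
lemma prime_inf_notin: "prime_ideal P \<Longrightarrow> a \<notin> P \<Longrightarrow> b \<notin> P \<Longrightarrow> inf a b \<notin> P"
  using prime_inf by blast




lemma comp_walk_0: "comp_walk P le x y 0 \<longleftrightarrow> x = y \<and> x \<in> P"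
  unfolding comp_walk_def by auto

lemma comp_walk_Suc: "comp_walk P le x y (Suc m) \<longleftrightarrow>
   (\<exists>J. x \<in> P \<and> x \<noteq> J \<and> (le x J \<or> le J x) \<and> comp_walk P le J y m)"
proof
  assume "comp_walk P le x y (Suc m)"
  then obtain h where h: "h 0 = x" "h (Suc m) = y" "\<forall>i\<le>Suc m. h i \<in> P"
    "\<forall>i<Suc m. h i \<noteq> h (Suc i) \<and> (le (h i) (h (Suc i)) \<or> le (h (Suc i)) (h i))"
    unfolding comp_walk_def by blast
  have "comp_walk P le (h 1) y m" unfolding comp_walk_def
    by (rule exI[of _ "\<lambda>i. h (Suc i)"]) (use h in auto)
  moreover have "x \<in> P" using h by auto
  moreover have "x \<noteq> h 1 \<and> (le x (h 1) \<or> le (h 1) x)" using h(1) h(4)[rule_format, of 0] by auto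
  ultimately show "\<exists>J. x \<in> P \<and> x \<noteq> J \<and> (le x J \<or> le J x) \<and> comp_walk P le J y m" by blast
next
  assume "\<exists>J. x \<in> P \<and> x \<noteq> J \<and> (le x J \<or> le J x) \<and> comp_walk P le J y m"
  then obtain J g where J: "x \<in> P" "x \<noteq> J" "le x J \<or> le J x" and
    g: "g 0 = J" "g m = y" "\<forall>i\<le>m. g i \<in> P"
    "\<forall>i<m. g i \<noteq> g (Suc i) \<and> (le (g i) (g (Suc i)) \<or> le (g (Suc i)) (g i))"
    unfolding comp_walk_def by blast
  define h where "h = (\<lambda>i. case i of 0 \<Rightarrow> x | Suc j \<Rightarrow> g j)"
  have "h 0 = x" "h (Suc m) = y" using g unfolding h_def by auto
  moreover have "\<forall>i\<le>Suc m. h i \<in> P"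
  proof (intro allI impI)
    fix i assume "i \<le> Suc m" then show "h i \<in> P" using J g unfolding h_def by (cases i) auto
  qed
  moreover have "\<forall>i<Suc m. h i \<noteq> h (Suc i) \<and> (le (h i) (h (Suc i)) \<or> le (h (Suc i)) (h i))"
  proof (intro allI impI)
    fix i assume "i < Suc m" then show "h i \<noteq> h (Suc i) \<and> (le (h i) (h (Suc i)) \<or> le (h (Suc i)) (h i))"
      using J g unfolding h_def by (cases i) auto
  qed
  ultimately show "comp_walk P le x y (Suc m)" unfolding comp_walk_def by blast
qed

lemma ell_le_iff: "ell P le x y \<le> enat n \<longleftrightarrow> (\<exists>m\<le>n. comp_walk P le x y m)"
proof
  assume "ell P le x y \<le> enat n"
  then have ex: "\<exists>k. comp_walk P le x y k" and "(LEAST k. comp_walk P le x y k) \<le> n"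
    unfolding ell_def by (auto split: if_splits)
  then show "\<exists>m\<le>n. comp_walk P le x y m" using LeastI_ex[OF ex] by blast
next
  assume "\<exists>m\<le>n. comp_walk P le x y m"
  then obtain m where "m \<le> n" "comp_walk P le x y m" by blast
  then have "(LEAST k. comp_walk P le x y k) \<le> n" using Least_le[of "comp_walk P le x y" m] by simp
  then show "ell P le x y \<le> enat n" unfolding ell_def using \<open>comp_walk P le x y m\<close> by auto
qed

fun reach :: "nat \<Rightarrow> 'a::{distrib_lattice,bounded_lattice} set \<Rightarrow> 'a set \<Rightarrow> bool" where
  "reach 0 x z = (prime_ideal x \<and> z = x)"
| "reach (Suc k) x z = (prime_ideal x \<and> (\<exists>J. prime_ideal J \<and> (J \<subseteq> x \<or> x \<subseteq> J) \<and> reach k J z))"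

lemma reach_prime: "reach k x z \<Longrightarrow> prime_ideal x \<and> prime_ideal z"
  by (induction k arbitrary: x) auto

lemma reach_Suc: "reach k x z \<Longrightarrow> reach (Suc k) x z"
  using reach_prime by (metis order.refl reach.simps(2))

lemma reach_mono: "reach k x z \<Longrightarrow> k \<le> m \<Longrightarrow> reach m x z"
proof (induction m)
  case 0 then show ?case by simp
next
  case (Suc m) then show ?case using reach_Suc by (metis le_Suc_eq)
qed

lemma reach_trans: "reach a x y \<Longrightarrow> reach b y z \<Longrightarrow> reach (a + b) x z"
  by (induction a arbitrary: x) auto

lemma reach_one: "prime_ideal x \<Longrightarrow> prime_ideal J \<Longrightarrow> J \<subseteq> x \<or> x \<subseteq> J \<Longrightarrow> reach 1 x J"
  by auto

lemma walk_reach: "comp_walk dual_space (\<subseteq>) x z m \<Longrightarrow> reach m x z"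
proof (induction m arbitrary: x)
  case 0 then show ?case by (auto simp: comp_walk_0 dual_space_def)
next
  case (Suc m)
  then obtain J where "x \<in> dual_space" "x \<subseteq> J \<or> J \<subseteq> x" "comp_walk dual_space (\<subseteq>) J z m"
    unfolding comp_walk_Suc by blast
  moreover have "prime_ideal J" using calculation(3) reach_prime Suc.IH by blast
  ultimately show ?case using Suc.IH by (auto simp: dual_space_def)
qed

lemma reach_walk: "reach k x z \<Longrightarrow> \<exists>m\<le>k. comp_walk dual_space (\<subseteq>) x z m"
proof (induction k arbitrary: x)
  case 0 then show ?case by (auto simp: comp_walk_0 dual_space_def)
next
  case (Suc k)
  then obtain J where x: "prime_ideal x" and J: "prime_ideal J" "J \<subseteq> x \<or> x \<subseteq> J" "reach k J z" by auto
  then obtain m where m: "m \<le> k" "comp_walk dual_space (\<subseteq>) J z m" using Suc.IH by blast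
  show ?case
  proof (cases "J = x")
    case True then show ?thesis using m by (intro exI[of _ m]) auto
  next
    case False
    then have "comp_walk dual_space (\<subseteq>) x z (Suc m)" unfolding comp_walk_Suc
      using x J m by (auto simp: dual_space_def)
    then show ?thesis using m by (intro exI[of _ "Suc m"]) auto
  qed
qed

lemma ell_le_reach: "x \<in> dual_space \<Longrightarrow> ell dual_space (\<subseteq>) x z \<le> enat n \<longleftrightarrow> reach n x z"
  unfolding ell_le_iff using walk_reach reach_walk reach_mono by metis

context pmalg begin

abbreviation zt where "zt \<equiv> zeta dm"

lemma zeta_zeta[simp]: "zt (zt I) = I"
  unfolding zeta_def by auto

lemma zeta_anti: "I \<subseteq> J \<Longrightarrow> zt J \<subseteq> zt I"
  unfolding zeta_def by auto

lemma zeta_prime: assumes "prime_ideal I" shows "prime_ideal (zt I)"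
  unfolding prime_ideal_def zeta_def
proof (intro conjI allI impI)
  show "{a. dm a \<notin> I} \<noteq> {}" using assms prime_top by (metis dm_bot empty_iff mem_Collect_eq)
  show "top \<notin> {a. dm a \<notin> I}" using assms prime_bot by simp
next
  fix a b assume "a \<in> {a. dm a \<notin> I}" "b \<le> a"
  then show "b \<in> {a. dm a \<notin> I}" using assms prime_down dm_anti by blast
next
  fix a b assume "a \<in> {a. dm a \<notin> I}" "b \<in> {a. dm a \<notin> I}"
  then show "sup a b \<in> {a. dm a \<notin> I}" using assms prime_inf by (auto simp: dm_sup)
next
  fix a b assume "inf a b \<in> {a. dm a \<notin> I}"
  then show "a \<in> {a. dm a \<notin> I} \<or> b \<in> {a. dm a \<notin> I}" using assms prime_sup by (auto simp: dm_inf)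
qed

lemma zeta_pow: "(zt ^^ k) I = (if even k then I else zt I)"
  by (induction k) auto

lemma reach_zeta: "reach k x z \<Longrightarrow> reach k (zt x) (zt z)"
proof (induction k arbitrary: x)
  case 0 then show ?case using zeta_prime by auto
next
  case (Suc k)
  then obtain J where "prime_ideal x" "prime_ideal J" "J \<subseteq> x \<or> x \<subseteq> J" "reach k J z" by auto
  then show ?case using Suc.IH zeta_prime zeta_anti by (meson reach.simps(2))
qed

lemma walk_zeta: "comp_walk dual_space (\<subseteq>) x z m \<Longrightarrow> comp_walk dual_space (\<subseteq>) (zt x) (zt z) m"
proof (induction m arbitrary: x)
  case 0 then show ?case using zeta_prime by (auto simp: comp_walk_0 dual_space_def)
next
  case (Suc m)
  then obtain J where "x \<in> dual_space" "x \<noteq> J" "x \<subseteq> J \<or> J \<subseteq> x" "comp_walk dual_space (\<subseteq>) J z m"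
    unfolding comp_walk_Suc by blast
  moreover have "zt x \<noteq> zt J" using calculation(2) by (metis zeta_zeta)
  ultimately show ?case unfolding comp_walk_Suc using Suc.IH zeta_prime zeta_anti
    by (metis dual_space_def mem_Collect_eq)
qed

end



context pmalg begin

lemma f_notin_step:
  assumes I: "prime_ideal I" and fb: "f b \<notin> I" and J: "prime_ideal J" and c: "J \<subseteq> I \<or> I \<subseteq> J"
  shows "b \<notin> zt J"
proof -
  have "inf (dm b) (f b) = bot" unfolding f_def by simp
  then have "inf (dm b) (f b) \<in> I" "inf (dm b) (f b) \<in> J" using I J prime_bot by auto
  from c have "dm b \<in> J"
  proof
    assume "J \<subseteq> I"
    then have "f b \<notin> J" using fb by auto
    then show ?thesis using prime_inf[OF J \<open>inf (dm b) (f b) \<in> J\<close>] by auto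
  next
    assume "I \<subseteq> J"
    have "dm b \<in> I" using prime_inf[OF I \<open>inf (dm b) (f b) \<in> I\<close>] fb by auto
    then show ?thesis using \<open>I \<subseteq> J\<close> by auto
  qed
  then show ?thesis unfolding zeta_def by auto
qed

lemma lemD: "prime_ideal I \<Longrightarrow> (f ^^ k) a \<notin> I \<Longrightarrow> reach k I K \<Longrightarrow> a \<notin> (zt ^^ k) K"
proof (induction k arbitrary: I K)
  case 0 then show ?case by auto
next
  case (Suc k)
  then obtain J where J: "prime_ideal J" "J \<subseteq> I \<or> I \<subseteq> J" "reach k J K" by auto
  have "f ((f ^^ k) a) \<notin> I" using Suc.prems by simp
  then have "(f ^^ k) a \<notin> zt J" using f_notin_step Suc.prems(1) J by blast
  moreover have "reach k (zt J) (zt K)" using reach_zeta J by blast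
  ultimately have "a \<notin> (zt ^^ k) (zt K)" using Suc.IH zeta_prime J by blast
  then show ?case by (simp add: funpow_Suc_right del: funpow.simps)
qed

definition directed :: "'a set \<Rightarrow> bool" where
  "directed Q \<longleftrightarrow> (\<forall>a\<in>Q. \<forall>b\<in>Q. \<exists>c\<in>Q. a \<le> c \<and> b \<le> c)"

lemma lemR: "prime_ideal x \<Longrightarrow> Q \<noteq> {} \<Longrightarrow> directed Q \<Longrightarrow> (\<forall>q\<in>Q. (f ^^ k) q \<in> x) \<Longrightarrow>
   \<exists>p. prime_ideal p \<and> Q \<subseteq> p \<and> reach k x ((zt ^^ k) p)"
proof (induction k arbitrary: x)
  case 0 then show ?case by auto
next
  case (Suc k)
  note x = Suc.prems(1) and Qne = Suc.prems(2) and dir = Suc.prems(3)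
  have fx: "\<forall>q\<in>Q. f ((f ^^ k) q) \<in> x" using Suc.prems(4) by simp
  define F where "F = {z. \<exists>b q. b \<notin> x \<and> q \<in> Q \<and> inf b (dm ((f ^^ k) q)) \<le> z}"
  obtain q0 where q0: "q0 \<in> Q" using Qne by auto
  have "is_filter F" unfolding is_filter_def
  proof (intro conjI allI impI)
    show "F \<noteq> {}" unfolding F_def using q0 prime_top[OF x] by blast
  next
    fix a b assume "a \<in> F" "a \<le> b" then show "b \<in> F" unfolding F_def by (auto intro: order.trans)
  next
    fix a b assume "a \<in> F" "b \<in> F"
    then obtain b1 q1 b2 q2 where h: "b1 \<notin> x" "q1 \<in> Q" "inf b1 (dm ((f ^^ k) q1)) \<le> a"
      "b2 \<notin> x" "q2 \<in> Q" "inf b2 (dm ((f ^^ k) q2)) \<le> b" unfolding F_def by blast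
    obtain q3 where q3: "q3 \<in> Q" "q1 \<le> q3" "q2 \<le> q3" using dir h unfolding directed_def by blast
    have m1: "dm ((f ^^ k) q3) \<le> dm ((f ^^ k) q1)" using q3 fpow_mono dm_anti by blast
    have m2: "dm ((f ^^ k) q3) \<le> dm ((f ^^ k) q2)" using q3 fpow_mono dm_anti by blast
    have "inf (inf b1 b2) (dm ((f ^^ k) q3)) \<le> inf a b"
    proof -
      have "inf (inf b1 b2) (dm ((f ^^ k) q3)) \<le> inf b1 (dm ((f ^^ k) q1))"
        using m1 by (meson inf.coboundedI1 inf_mono inf_le1 order.refl)
      moreover have "inf (inf b1 b2) (dm ((f ^^ k) q3)) \<le> inf b2 (dm ((f ^^ k) q2))"
        using m2 by (meson inf.coboundedI2 inf_mono inf_le2 order.refl)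
      ultimately show ?thesis using h by (meson le_inf_iff order.trans)
    qed
    moreover have "inf b1 b2 \<notin> x" using prime_inf_notin[OF x] h by blast
    ultimately show "inf a b \<in> F" unfolding F_def using q3 by blast
  qed
  moreover have "is_ideal {bot}" unfolding is_ideal_def by (auto simp: bot_unique)
  moreover have "{bot} \<inter> F = {}"
  proof -
    { assume "bot \<in> F"
      then obtain b q where "b \<notin> x" "q \<in> Q" "inf b (dm ((f ^^ k) q)) \<le> bot" unfolding F_def by blast
      then have "inf (dm ((f ^^ k) q)) b = bot" by (simp add: inf.commute bot_unique)
      then have "b \<le> f ((f ^^ k) q)" unfolding f_def using ps_iff by blast
      then have "b \<in> x" using fx \<open>q \<in> Q\<close> prime_down[OF x] by blast
      then have False using \<open>b \<notin> x\<close> by simp }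
    then show ?thesis by blast
  qed
  ultimately obtain J where J: "prime_ideal J" "J \<inter> F = {}" using PIT by blast
  have Jx: "J \<subseteq> x"
  proof
    fix b assume "b \<in> J"
    show "b \<in> x"
    proof (rule ccontr)
      assume "b \<notin> x"
      then have "b \<in> F" unfolding F_def using q0 by (intro CollectI exI[of _ b] exI[of _ q0]) auto
      then show False using J \<open>b \<in> J\<close> by auto
    qed
  qed
  have "\<forall>q\<in>Q. (f ^^ k) q \<in> zt J"
  proof
    fix q assume "q \<in> Q"
    then have "dm ((f ^^ k) q) \<in> F" unfolding F_def using prime_top[OF x]
      by (intro CollectI exI[of _ top] exI[of _ q]) auto
    then show "(f ^^ k) q \<in> zt J" using J unfolding zeta_def by auto
  qed
  then obtain p where p: "prime_ideal p" "Q \<subseteq> p" "reach k (zt J) ((zt ^^ k) p)"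
    using Suc.IH[of "zt J"] zeta_prime J Qne dir by blast
  have "reach k J (zt ((zt ^^ k) p))" using reach_zeta[OF p(3)] by simp
  then have "reach (Suc k) x (zt ((zt ^^ k) p))" using x J Jx by auto
  then show ?case using p by auto
qed

lemma reach_zetapow: "reach k a b \<Longrightarrow> reach k ((zt ^^ j) a) ((zt ^^ j) b)"
  by (induction j) (auto simp: reach_zeta)

end



context pmalg begin


lemma cong_intro:
  assumes "refl \<theta>" "sym \<theta>" "trans \<theta>"
    and "\<And>a b c d. (a, b) \<in> \<theta> \<Longrightarrow> (c, d) \<in> \<theta> \<Longrightarrow> (inf a c, inf b d) \<in> \<theta>"
    and "\<And>a b c d. (a, b) \<in> \<theta> \<Longrightarrow> (c, d) \<in> \<theta> \<Longrightarrow> (sup a c, sup b d) \<in> \<theta>"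
    and "\<And>a b. (a, b) \<in> \<theta> \<Longrightarrow> (ps a, ps b) \<in> \<theta>"
    and "\<And>a b. (a, b) \<in> \<theta> \<Longrightarrow> (dm a, dm b) \<in> \<theta>"
  shows "pm_congruence ps dm \<theta>"
  unfolding pm_congruence_def equiv_def
proof (intro conjI allI impI)
  show "\<theta> \<subseteq> UNIV \<times> UNIV" by simp
  show "refl \<theta>" "sym \<theta>" "trans \<theta>" by fact+
next
  fix a b c d assume "(a, b) \<in> \<theta>" "(c, d) \<in> \<theta>"
  then show "(inf a c, inf b d) \<in> \<theta>" "(sup a c, sup b d) \<in> \<theta>" using assms(4,5) by blast+
next
  fix a b assume "(a, b) \<in> \<theta>"
  then show "(ps a, ps b) \<in> \<theta>" "(dm a, dm b) \<in> \<theta>" using assms(6,7) by blast+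
qed

lemma cong_Id: "pm_congruence ps dm Id"
  by (rule cong_intro) (auto simp: refl_Id sym_Id trans_Id)


lemma psi_cong: "pm_congruence ps dm {(a, b). ps a = ps b \<and> ps (dm a) = ps (dm b)}"
proof (rule cong_intro)
  show "refl {(a, b). ps a = ps b \<and> ps (dm a) = ps (dm b)}" by (auto simp: refl_on_def)
  show "sym {(a, b). ps a = ps b \<and> ps (dm a) = ps (dm b)}" by (auto simp: sym_def)
  show "trans {(a, b). ps a = ps b \<and> ps (dm a) = ps (dm b)}" by (auto simp: trans_def)
next
  fix a b c d assume "(a, b) \<in> {(a, b). ps a = ps b \<and> ps (dm a) = ps (dm b)}"
    "(c, d) \<in> {(a, b). ps a = ps b \<and> ps (dm a) = ps (dm b)}"
  then have h: "ps a = ps b" "ps (dm a) = ps (dm b)" "ps c = ps d" "ps (dm c) = ps (dm d)" by auto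
  have "ps (inf a c) = ps (inf b d)"
    using ps_eq_inf[OF h(1), of c] ps_eq_inf[OF h(3), of b] by (metis inf.commute)
  moreover have "ps (dm (inf a c)) = ps (dm (inf b d))" by (simp add: dm_inf ps_sup h)
  moreover have "ps (sup a c) = ps (sup b d)" by (simp add: ps_sup h)
  moreover have "ps (dm (sup a c)) = ps (dm (sup b d))"
    using ps_eq_inf[OF h(2), of "dm c"] ps_eq_inf[OF h(4), of "dm b"] by (metis inf.commute dm_sup)
  ultimately show "(inf a c, inf b d) \<in> {(a, b). ps a = ps b \<and> ps (dm a) = ps (dm b)}"
    "(sup a c, sup b d) \<in> {(a, b). ps a = ps b \<and> ps (dm a) = ps (dm b)}" by auto
next
  fix a b assume "(a, b) \<in> {(a, b). ps a = ps b \<and> ps (dm a) = ps (dm b)}"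
  then show "(ps a, ps b) \<in> {(a, b). ps a = ps b \<and> ps (dm a) = ps (dm b)}"
    "(dm a, dm b) \<in> {(a, b). ps a = ps b \<and> ps (dm a) = ps (dm b)}" by auto
qed

lemma regular_psi:
  assumes reg: "pm_regular ps dm" and h1: "ps a = ps b" and h2: "ps (dm a) = ps (dm b)"
  shows "a = b"
proof -
  let ?psi = "{(a, b). ps a = ps b \<and> ps (dm a) = ps (dm b)}"
  have "?psi `` {top} = Id `` {top}"
  proof -
    { fix b assume "(top, b) \<in> ?psi"
      then have "ps (dm b) = top" by simp
      then have "b = top" using ps_eq_top by (metis dm_dm dm_bot) }
    then show ?thesis by auto
  qed
  then have ex: "\<exists>a. ?psi `` {a} = Id `` {a}" by blast
  have "?psi = Id" by (rule reg[unfolded pm_regular_def, rule_format, OF psi_cong cong_Id ex])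
  then show ?thesis using h1 h2 by blast
qed

lemma no_chain:
  fixes I J K :: "'a set"
  assumes reg: "pm_regular ps dm" and I: "prime_ideal I" and J: "prime_ideal J" and K: "prime_ideal K"
    and IJ: "I \<subset> J" and JK: "J \<subset> K"
  shows False
proof -
  obtain y where y: "y \<in> J" "y \<notin> I" using IJ by auto
  obtain x where x: "x \<in> K" "x \<notin> J" using JK by auto
  define s where "s = sup y (ps y)"
  define t where "t = inf x (dm (ps (dm x)))"
  have "inf y (ps y) \<in> I" using prime_bot[OF I] by simp
  then have "ps y \<in> I" using prime_inf[OF I] y by blast
  then have "ps y \<in> J" using IJ by blast
  then have sJ: "s \<in> J" unfolding s_def using prime_sup[OF J y(1)] by blast
  have st: "sup x (dm (ps (dm x))) = top" using dm_inf[of "dm x" "ps (dm x)"] by simp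
  have "dm (ps (dm x)) \<notin> K"
  proof
    assume "dm (ps (dm x)) \<in> K"
    then have "sup x (dm (ps (dm x))) \<in> K" using prime_sup[OF K] x by blast
    then show False using st prime_top[OF K] by simp
  qed
  then have "dm (ps (dm x)) \<notin> J" using JK by auto
  then have tJ: "t \<notin> J" unfolding t_def using prime_inf_notin[OF J] x by blast
  have pss: "ps s = bot" unfolding s_def ps_sup by simp
  have "ps (inf t s) = ps t"
  proof -
    have "\<And>z. z \<le> ps (inf t s) \<longleftrightarrow> z \<le> ps t"
    proof -
      fix z
      have e: "inf (inf t s) z = inf s (inf t z)" by (simp add: inf_aci)
      have "z \<le> ps (inf t s) \<longleftrightarrow> inf (inf t s) z = bot" by (rule ps_iff[symmetric])
      also have "\<dots> \<longleftrightarrow> inf s (inf t z) = bot" unfolding e ..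
      also have "\<dots> \<longleftrightarrow> inf t z \<le> ps s" by (rule ps_iff)
      also have "\<dots> \<longleftrightarrow> inf t z = bot" using pss by (simp add: bot_unique)
      also have "\<dots> \<longleftrightarrow> z \<le> ps t" by (rule ps_iff)
      finally show "z \<le> ps (inf t s) \<longleftrightarrow> z \<le> ps t" .
    qed
    then show ?thesis by (meson order.antisym order.refl)
  qed
  moreover have "ps (dm (inf t s)) = ps (dm t)"
  proof -
    have "ps (dm t) = bot" unfolding t_def dm_inf ps_sup by simp
    then show ?thesis by (simp add: dm_inf ps_sup)
  qed
  ultimately have "inf t s = t" using regular_psi[OF reg] by blast
  then have "t \<le> s" by (metis inf.orderI)
  then show False using sJ tJ prime_down[OF J] by blast
qed

lemma cong_parts:
  assumes "pm_congruence ps dm \<theta>"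
  shows "refl \<theta>" "sym \<theta>" "trans \<theta>"
    "\<And>a b c d. (a, b) \<in> \<theta> \<Longrightarrow> (c, d) \<in> \<theta> \<Longrightarrow> (inf a c, inf b d) \<in> \<theta>"
    "\<And>a b c d. (a, b) \<in> \<theta> \<Longrightarrow> (c, d) \<in> \<theta> \<Longrightarrow> (sup a c, sup b d) \<in> \<theta>"
    "\<And>a b. (a, b) \<in> \<theta> \<Longrightarrow> (ps a, ps b) \<in> \<theta>"
    "\<And>a b. (a, b) \<in> \<theta> \<Longrightarrow> (dm a, dm b) \<in> \<theta>"
proof -
  have e: "equiv UNIV \<theta>" and l: "\<forall>a b c d. (a, b) \<in> \<theta> \<longrightarrow> (c, d) \<in> \<theta> \<longrightarrow>
        (inf a c, inf b d) \<in> \<theta> \<and> (sup a c, sup b d) \<in> \<theta>"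
    and u: "\<forall>a b. (a, b) \<in> \<theta> \<longrightarrow> (ps a, ps b) \<in> \<theta> \<and> (dm a, dm b) \<in> \<theta>"
    using assms unfolding pm_congruence_def by (fact conjunct1, fact conjunct1[OF conjunct2], fact conjunct2[OF conjunct2])
  show "refl \<theta>" "sym \<theta>" "trans \<theta>" using e unfolding equiv_def by (fact conjunct1[OF conjunct2], fact conjunct1[OF conjunct2[OF conjunct2]], fact conjunct2[OF conjunct2[OF conjunct2]])
  show "\<And>a b c d. (a, b) \<in> \<theta> \<Longrightarrow> (c, d) \<in> \<theta> \<Longrightarrow> (inf a c, inf b d) \<in> \<theta>"
    "\<And>a b c d. (a, b) \<in> \<theta> \<Longrightarrow> (c, d) \<in> \<theta> \<Longrightarrow> (sup a c, sup b d) \<in> \<theta>"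
    using l by simp_all
  show "\<And>a b. (a, b) \<in> \<theta> \<Longrightarrow> (ps a, ps b) \<in> \<theta>"
    "\<And>a b. (a, b) \<in> \<theta> \<Longrightarrow> (dm a, dm b) \<in> \<theta>" using u by simp_all
qed

lemma cong_f:
  assumes "pm_congruence ps dm \<theta>" "(a, b) \<in> \<theta>" shows "(f a, f b) \<in> \<theta>"
  unfolding f_def by (rule cong_parts(6)[OF assms(1)], rule cong_parts(7)[OF assms(1)], rule assms(2))

lemma cong_fpow:
  assumes "pm_congruence ps dm \<theta>" "(a, b) \<in> \<theta>" shows "((f ^^ k) a, (f ^^ k) b) \<in> \<theta>"
proof (induction k)
  case 0 then show ?case using assms(2) by simp
next
  case (Suc k) then show ?case using cong_f[OF assms(1)] by simp
qed

lemma cong_g: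
  assumes "pm_congruence ps dm \<theta>" "(a, b) \<in> \<theta>" shows "(g a, g b) \<in> \<theta>"
  unfolding g_def by (rule cong_parts(4)[OF assms(1) assms(2) cong_f[OF assms]])

lemma inf_ps_s: "inf (ps a) s = inf (ps (inf a s)) s"
proof (rule order.antisym)
  show "inf (ps a) s \<le> inf (ps (inf a s)) s" by (simp add: le_infI1 ps_anti)
  have "inf a (inf (ps (inf a s)) s) = bot" using inf_ps[of "inf a s"] by (simp only: inf_aci)
  then have "inf (ps (inf a s)) s \<le> ps a" using ps_iff by blast
  then show "inf (ps (inf a s)) s \<le> inf (ps a) s" by simp
qed

lemma theta_cong:
  assumes fx: "f s = s"
  shows "pm_congruence ps dm {(a, b). inf a s = inf b s}"
proof (rule cong_intro)
  show "refl {(a, b). inf a s = inf b s}" by (auto simp: refl_on_def)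
  show "sym {(a, b). inf a s = inf b s}" by (auto simp: sym_def)
  show "trans {(a, b). inf a s = inf b s}" by (auto simp: trans_def)
next
  fix a b c d assume "(a, b) \<in> {(a, b). inf a s = inf b s}" "(c, d) \<in> {(a, b). inf a s = inf b s}"
  then have h: "inf a s = inf b s" "inf c s = inf d s" by auto
  have "inf (inf a c) s = inf (inf a s) (inf c s)" by (simp add: inf.assoc inf.left_commute inf.commute)
  also have "\<dots> = inf (inf b s) (inf d s)" using h by simp
  also have "\<dots> = inf (inf b d) s" by (simp add: inf.assoc inf.left_commute inf.commute)
  finally show "(inf a c, inf b d) \<in> {(a, b). inf a s = inf b s}" by simp
  have "inf (sup a c) s = sup (inf a s) (inf c s)" by (simp add: inf_sup_distrib2)
  also have "\<dots> = sup (inf b s) (inf d s)" using h by simp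
  also have "\<dots> = inf (sup b d) s" by (simp add: inf_sup_distrib2)
  finally show "(sup a c, sup b d) \<in> {(a, b). inf a s = inf b s}" by simp
next
  fix a b assume "(a, b) \<in> {(a, b). inf a s = inf b s}"
  then have h: "inf a s = inf b s" by auto
  show "(ps a, ps b) \<in> {(a, b). inf a s = inf b s}" using inf_ps_s[of a s] inf_ps_s[of b s] h by simp
  have ds: "inf (dm s) s = bot" using fx unfolding f_def by (metis inf_ps)
  have "\<And>a. inf (dm a) s = inf (dm (inf a s)) s"
    by (simp add: dm_inf inf_sup_distrib2 ds)
  then have "inf (dm a) s = inf (dm b) s" using h by metis
  then show "(dm a, dm b) \<in> {(a, b). inf a s = inf b s}" by simp
qed

lemma iter_eq: "pm_iter ps dm k = f ^^ k"
proof -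
  have "f = (\<lambda>y. ps (dm y))" by (rule ext) (simp add: f_def)
  then show ?thesis unfolding pm_iter_def by simp
qed

lemma g_eq: "inf x (ps (dm x)) = g x" unfolding g_def f_def by simp

lemma simple_zero:
  assumes M: "in_M n ps dm" and S: "pm_simple ps dm" and c: "c \<noteq> top"
  shows "(f ^^ n) (g c) = bot"
proof -
  define s where "s = (f ^^ n) (g c)"
  have "f s = s" using M unfolding in_M_def s_def iter_eq g_eq by simp
  then have cong: "pm_congruence ps dm {(a, b). inf a s = inf b s}" by (rule theta_cong)
  then have "{(a, b). inf a s = inf b s} = Id \<or> {(a, b). inf a s = inf b s} = UNIV"
    using S unfolding pm_simple_def by blast
  then show ?thesis
  proof
    assume "{(a, b). inf a s = inf b s} = Id"
    moreover have "(s, top) \<in> {(a, b). inf a s = inf b s}" by simp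
    ultimately have "s = top" by auto
    then have "g c = top" unfolding s_def using fpow_eq_top by blast
    then show ?thesis using g_eq_top c by blast
  next
    assume "{(a, b). inf a s = inf b s} = UNIV"
    then have "(bot, top) \<in> {(a, b). inf a s = inf b s}" by simp
    then show ?thesis unfolding s_def by simp
  qed
qed

end



definition minimal :: "'a::{distrib_lattice,bounded_lattice} set \<Rightarrow> bool" where
  "minimal q \<longleftrightarrow> prime_ideal q \<and> (\<forall>r. prime_ideal r \<longrightarrow> r \<subseteq> q \<longrightarrow> r = q)"
definition maximal :: "'a::{distrib_lattice,bounded_lattice} set \<Rightarrow> bool" where
  "maximal q \<longleftrightarrow> prime_ideal q \<and> (\<forall>r. prime_ideal r \<longrightarrow> q \<subseteq> r \<longrightarrow> r = q)"

context pmalg begin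

lemma min_or_max: fixes q :: "'a set" assumes reg: "pm_regular ps dm" and q: "prime_ideal q" shows "minimal q \<or> maximal q"
proof (rule ccontr)
  assume "\<not> (minimal q \<or> maximal q)"
  then obtain r s where "prime_ideal r" "r \<subseteq> q" "r \<noteq> q" "prime_ideal s" "q \<subseteq> s" "s \<noteq> q"
    using q unfolding minimal_def maximal_def by blast
  then show False using no_chain[OF reg, of r q s] q by blast
qed

lemma max_zt: "maximal q \<Longrightarrow> minimal (zt q)"
  unfolding minimal_def maximal_def using zeta_prime zeta_anti zeta_zeta by metis

lemma min_zt: "minimal q \<Longrightarrow> maximal (zt q)"
  unfolding minimal_def maximal_def using zeta_prime zeta_anti zeta_zeta by metis

lemma parity:
  fixes x0 z :: "'a set"
  assumes reg: "pm_regular ps dm" and x0: "minimal x0" and w: "comp_walk dual_space (\<subseteq>) x0 z m" and m: "m \<ge> 1"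
  shows "(odd m \<longrightarrow> \<not> minimal z) \<and> (even m \<longrightarrow> \<not> maximal z)"
proof -
  obtain h where h: "h 0 = x0" "h m = z" "\<forall>i\<le>m. h i \<in> dual_space"
    "\<forall>i<m. h i \<noteq> h (Suc i) \<and> (h i \<subseteq> h (Suc i) \<or> h (Suc i) \<subseteq> h i)"
    using w unfolding comp_walk_def by blast
  have pr: "prime_ideal (h i)" if "i \<le> m" for i using h(3) that unfolding dual_space_def by auto
  have alt: "i < m \<longrightarrow> (even i \<longrightarrow> h i \<subset> h (Suc i)) \<and> (odd i \<longrightarrow> h (Suc i) \<subset> h i)" for i
  proof (induction i)
    case 0
    show ?case
    proof
      assume "0 < m"
      have "h 0 \<noteq> h 1" "h 0 \<subseteq> h 1 \<or> h 1 \<subseteq> h 0" using h(4) \<open>0 < m\<close> by auto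
      moreover have "\<not> (h 1 \<subseteq> h 0)" using x0 h(1) pr[of 1] \<open>0 < m\<close> \<open>h 0 \<noteq> h 1\<close>
        unfolding minimal_def by auto
      ultimately show "(even 0 \<longrightarrow> h 0 \<subset> h (Suc 0)) \<and> (odd (0::nat) \<longrightarrow> h (Suc 0) \<subset> h 0)" by auto
    qed
  next
    case (Suc i)
    show ?case
    proof
      assume si: "Suc i < m"
      then have IH: "(even i \<longrightarrow> h i \<subset> h (Suc i)) \<and> (odd i \<longrightarrow> h (Suc i) \<subset> h i)" using Suc.IH by simp
      have st: "h (Suc i) \<noteq> h (Suc (Suc i))" "h (Suc i) \<subseteq> h (Suc (Suc i)) \<or> h (Suc (Suc i)) \<subseteq> h (Suc i)"
        using h(4) si by auto
      have p0: "prime_ideal (h i)" "prime_ideal (h (Suc i))" "prime_ideal (h (Suc (Suc i)))"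
        using pr si by auto
      show "(even (Suc i) \<longrightarrow> h (Suc i) \<subset> h (Suc (Suc i))) \<and> (odd (Suc i) \<longrightarrow> h (Suc (Suc i)) \<subset> h (Suc i))"
      proof (cases "even i")
        case True
        then have "h i \<subset> h (Suc i)" using IH by simp
        have "\<not> h (Suc i) \<subset> h (Suc (Suc i))"
          using no_chain[OF reg p0] \<open>h i \<subset> h (Suc i)\<close> by blast
        then show ?thesis using st True by auto
      next
        case False
        then have "h (Suc i) \<subset> h i" using IH by simp
        have "\<not> h (Suc (Suc i)) \<subset> h (Suc i)"
          using no_chain[OF reg p0(3) p0(2) p0(1)] \<open>h (Suc i) \<subset> h i\<close> by blast
        then show ?thesis using st False by auto
      qed
    qed
  qed
  obtain k where k: "m = Suc k" using m by (cases m) auto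
  have last: "(even k \<longrightarrow> h k \<subset> z) \<and> (odd k \<longrightarrow> z \<subset> h k)" using alt[of k] k h(2) by simp
  have pk: "prime_ideal (h k)" using pr k by simp
  show ?thesis
  proof (intro conjI impI)
    assume "odd m" then have "even k" using k by simp
    then have "h k \<subset> z" using last by simp
    then show "\<not> minimal z" using pk unfolding minimal_def by blast
  next
    assume "even m" then have "odd k" using k by simp
    then have "z \<subset> h k" using last by simp
    then show "\<not> maximal z" using pk unfolding maximal_def by blast
  qed
qed

lemma rhs_zero:
  assumes RHS: "\<forall>x\<in>(dual_space::'a set set). \<forall>y\<in>dual_space.
            ell dual_space (\<subseteq>) x y \<le> enat n \<or> ell dual_space (\<subseteq>) x (zt y) \<le> enat n"
    and c: "c \<noteq> top"
  shows "(f ^^ n) (g c) = bot"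
proof (rule ccontr)
  assume ne: "(f ^^ n) (g c) \<noteq> bot"
  then have "\<not> (f ^^ n) (g c) \<le> bot" using bot_unique by blast
  then obtain I where I: "prime_ideal I" "(f ^^ n) (g c) \<notin> I" using prime_sep by blast
  define u where "u = g c"
  have ndu: "\<not> dm u \<le> u"
  proof
    assume du: "dm u \<le> u"
    have "dm u = sup (dm c) (dm (f c))" unfolding u_def g_def by (simp add: dm_inf)
    then have "dm c \<le> dm u" by simp
    moreover have "u \<le> ps (dm c)" unfolding u_def g_def f_def by simp
    ultimately have "dm c \<le> ps (dm c)" using du by (meson order.trans)
    then have "inf (dm c) (dm c) = bot" using ps_iff by blast
    then have "dm c = bot" by simp
    then have "c = top" by (metis dm_dm dm_bot)
    then show False using c by simp
  qed
  then obtain K where K: "prime_ideal K" "u \<in> K" "dm u \<notin> K" using prime_sep by blast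
  have uzK: "u \<in> zt K" using K unfolding zeta_def by simp
  have "I \<in> dual_space" "K \<in> dual_space" using I K unfolding dual_space_def by auto
  then have "ell dual_space (\<subseteq>) I K \<le> enat n \<or> ell dual_space (\<subseteq>) I (zt K) \<le> enat n" using RHS by blast
  then have "reach n I K \<or> reach n I (zt K)" using ell_le_reach \<open>I \<in> dual_space\<close> by blast
  then have "u \<notin> (zt ^^ n) K \<or> u \<notin> (zt ^^ n) (zt K)" using lemD[OF I(1)] I(2) unfolding u_def by blast
  then show False using K(2) uzK by (auto simp: zeta_pow split: if_splits)
qed

lemma rhs_to_lhs:
  assumes bt: "(bot::'a) \<noteq> top" and reg: "pm_regular ps dm"
    and RHS: "\<forall>x\<in>(dual_space::'a set set). \<forall>y\<in>dual_space.
            ell dual_space (\<subseteq>) x y \<le> enat n \<or> ell dual_space (\<subseteq>) x (zt y) \<le> enat n"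
  shows "in_M n ps dm \<and> pm_simple ps dm"
proof
  have "\<forall>x. (f ^^ n) (g x) = (f ^^ Suc n) (g x)"
  proof
    fix x show "(f ^^ n) (g x) = (f ^^ Suc n) (g x)"
    proof (cases "x = top")
      case True then show ?thesis by simp
    next
      case False then show ?thesis using rhs_zero[OF RHS False] by simp
    qed
  qed
  then show "in_M n ps dm" unfolding in_M_def iter_eq g_eq using pm reg by simp
next
  have key: "(f ^^ n) (g c) = bot" if "c \<noteq> top" for c using rhs_zero[OF RHS that] .
  show "pm_simple ps dm" unfolding pm_simple_def
  proof (intro conjI allI impI)
    show "\<exists>a b::'a. a \<noteq> b" using bt by blast
  next
    fix \<theta> assume cg: "pm_congruence ps dm \<theta>"
    note cp = cong_parts[OF cg]
    show "\<theta> = Id \<or> \<theta> = UNIV"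
    proof (cases "\<exists>c. (top, c) \<in> \<theta> \<and> c \<noteq> top")
      case True
      then obtain c where c: "(top, c) \<in> \<theta>" "c \<noteq> top" by blast
      have "((f ^^ n) (g top), (f ^^ n) (g c)) \<in> \<theta>" using cong_fpow[OF cg cong_g[OF cg c(1)]] .
      then have tb: "(top, bot) \<in> \<theta>" using key[OF c(2)] by simp
      then have bt2: "(bot, top) \<in> \<theta>" using cp(2) unfolding sym_def by blast
      have at: "(a, top) \<in> \<theta>" for a
      proof -
        have "(a, a) \<in> \<theta>" using cp(1) unfolding refl_on_def by blast
        then have "(sup a bot, sup a top) \<in> \<theta>" using cp(5) bt2 by blast
        then show ?thesis by simp
      qed
      have "(a, b) \<in> \<theta>" for a b
      proof -
        have "(top, b) \<in> \<theta>" using at[of b] cp(2) unfolding sym_def by blast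
        then show ?thesis using at[of a] cp(3) unfolding trans_def by blast
      qed
      then show ?thesis by auto
    next
      case False
      then have "\<theta> `` {top} = Id `` {top}" using cp(1) unfolding refl_on_def by auto
      then have ex: "\<exists>a. \<theta> `` {a} = Id `` {a}" by blast
      have "\<theta> = Id" by (rule reg[unfolded pm_regular_def, rule_format, OF cg cong_Id ex])
      then show ?thesis by simp
    qed
  qed
qed

end



context pmalg begin

lemma lhs_to_rhs:
  assumes M: "in_M n ps dm" and S: "pm_simple ps dm" and reg: "pm_regular ps dm"
    and x: "x \<in> (dual_space::'a set set)" and y: "y \<in> dual_space"
  shows "ell dual_space (\<subseteq>) x y \<le> enat n \<or> ell dual_space (\<subseteq>) x (zt y) \<le> enat n"
proof (rule ccontr)
  assume "\<not> ?thesis"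
  then have n1: "\<not> (\<exists>m\<le>n. comp_walk dual_space (\<subseteq>) x y m)"
    and n2: "\<not> (\<exists>m\<le>n. comp_walk dual_space (\<subseteq>) x (zt y) m)" unfolding ell_le_iff by auto
  have px: "prime_ideal x" and py: "prime_ideal y" using x y unfolding dual_space_def by auto
  have far: "\<not> comp_walk dual_space (\<subseteq>) a b m"
    if a: "a \<in> {x, zt x}" and b: "b \<in> {y, zt y}" and m: "m \<le> n" for a b m
  proof
    assume wk: "comp_walk dual_space (\<subseteq>) a b m"
    have "\<exists>b'\<in>{y, zt y}. comp_walk dual_space (\<subseteq>) x b' m"
    proof (cases "a = x")
      case True then show ?thesis using wk b by blast
    next
      case False
      then have "a = zt x" using a by auto
      then have "comp_walk dual_space (\<subseteq>) x (zt b) m" using walk_zeta[OF wk] by simp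
      moreover have "zt b \<in> {y, zt y}" using b by auto
      ultimately show ?thesis by blast
    qed
    then show False using n1 n2 m by blast
  qed
  obtain x0 where x0: "x0 \<in> {x, zt x}" "minimal x0"
    using min_or_max[OF reg px] max_zt by blast
  obtain w where w: "w \<in> {y, zt y}" "maximal w"
    using min_or_max[OF reg py] min_zt py by blast
  have px0: "prime_ideal x0" and pw: "prime_ideal w" using x0 w unfolding minimal_def maximal_def by auto
  have zw: "zt w \<in> {y, zt y}" using w by auto
  have key: "(f ^^ n) (g c) = bot" if "c \<noteq> top" for c using simple_zero[OF M S that] .
  have wtop: "c \<noteq> top" if "c \<in> w" for c using that prime_top[OF pw] by auto
  define Q where "Q = g ` w"
  have Qne: "Q \<noteq> {}" unfolding Q_def using prime_bot[OF pw] by auto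
  have Qdir: "directed Q" unfolding directed_def Q_def
  proof (intro ballI)
    fix a b assume "a \<in> g ` w" "b \<in> g ` w"
    then obtain a0 b0 where "a0 \<in> w" "b0 \<in> w" "a = g a0" "b = g b0" by auto
    moreover have "sup a0 b0 \<in> w" using prime_sup[OF pw] calculation by blast
    ultimately show "\<exists>c\<in>g ` w. a \<le> c \<and> b \<le> c" using g_mono
      by (metis image_eqI sup_ge1 sup_ge2)
  qed
  have "\<forall>q\<in>Q. (f ^^ n) q \<in> x0" unfolding Q_def using key wtop prime_bot[OF px0] by auto
  then obtain p where p: "prime_ideal p" "Q \<subseteq> p" "reach n x0 ((zt ^^ n) p)"
    using lemR[OF px0 Qne Qdir] by blast
  show False
  proof (cases "w \<subseteq> p")
    case True
    then have "p = w" using w(2) p(1) unfolding maximal_def by blast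
    then obtain m where "m \<le> n" "comp_walk dual_space (\<subseteq>) x0 ((zt ^^ n) w) m"
      using reach_walk p(3) by blast
    moreover have "(zt ^^ n) w \<in> {y, zt y}" using w zw by (simp add: zeta_pow)
    ultimately show False using far x0(1) by blast
  next
    case False
    then obtain c0 where c0: "c0 \<in> w" "c0 \<notin> p" by auto
    define Q' where "Q' = {c \<in> w. c0 \<le> c}"
    have Q'ne: "Q' \<noteq> {}" unfolding Q'_def using c0 by auto
    have Q'dir: "directed Q'" unfolding directed_def Q'_def
    proof (intro ballI)
      fix a b assume a: "a \<in> {c \<in> w. c0 \<le> c}" and b: "b \<in> {c \<in> w. c0 \<le> c}"
      then have "sup a b \<in> w" using prime_sup[OF pw] by blast
      moreover have "c0 \<le> sup a b" using a by (auto intro: le_supI1)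
      ultimately show "\<exists>c\<in>{c \<in> w. c0 \<le> c}. a \<le> c \<and> b \<le> c" by auto
    qed
    have "\<forall>c\<in>Q'. (f ^^ 1) c \<in> p"
    proof
      fix c assume c: "c \<in> Q'"
      then have "g c \<in> p" using p(2) unfolding Q_def Q'_def by auto
      moreover have "c \<notin> p" using c c0 prime_down[OF p(1)] unfolding Q'_def by blast
      ultimately show "(f ^^ 1) c \<in> p" using prime_inf[OF p(1)] unfolding g_def by auto
    qed
    then obtain p' where p': "prime_ideal p'" "Q' \<subseteq> p'" "reach 1 p ((zt ^^ 1) p')"
      using lemR[OF p(1) Q'ne Q'dir] by blast
    have "w \<subseteq> p'"
    proof
      fix c assume "c \<in> w"
      then have "sup c c0 \<in> Q'" unfolding Q'_def using prime_sup[OF pw] c0 by auto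
      then have "sup c c0 \<in> p'" using p' by auto
      then show "c \<in> p'" using prime_down[OF p'(1)] by (meson sup_ge1)
    qed
    then have "p' = w" using w(2) p'(1) unfolding maximal_def by blast
    then have "reach 1 p (zt w)" using p'(3) by simp
    then have "reach 1 ((zt ^^ n) p) ((zt ^^ n) (zt w))" by (rule reach_zetapow)
    then have "reach (n + 1) x0 ((zt ^^ n) (zt w))" using reach_trans p(3) by blast
    then obtain m where m: "m \<le> n + 1" "comp_walk dual_space (\<subseteq>) x0 ((zt ^^ n) (zt w)) m"
      using reach_walk by blast
    have zin: "(zt ^^ n) (zt w) \<in> {y, zt y}" using w zw by (simp add: zeta_pow)
    have "\<not> m \<le> n" using far x0(1) zin m(2) by blast
    then have mS: "m = Suc n" using m(1) by simp
    have par: "(odd m \<longrightarrow> \<not> minimal ((zt ^^ n) (zt w))) \<and> (even m \<longrightarrow> \<not> maximal ((zt ^^ n) (zt w)))"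
      using parity[OF reg x0(2) m(2)] mS by simp
    show False
    proof (cases "even n")
      case True
      then have "odd m" using mS by simp
      moreover have "(zt ^^ n) (zt w) = zt w" using True by (simp add: zeta_pow)
      ultimately show False using par max_zt[OF w(2)] by simp
    next
      case False
      then have "even m" using mS by simp
      moreover have "(zt ^^ n) (zt w) = w" using False by (simp add: zeta_pow)
      ultimately show False using par w(2) by simp
    qed
  qed
qed

end

theorem corollary4p3:
  fixes ps dm :: "'a::{distrib_lattice,bounded_lattice} \<Rightarrow> 'a" and n :: nat
  assumes "(bot::'a) \<noteq> top"
    and "pm_algebra ps dm"
    and "pm_regular ps dm"
  shows "(in_M n ps dm \<and> pm_simple ps dm) \<longleftrightarrow>
         (\<forall>x\<in>(dual_space::'a set set). \<forall>y\<in>dual_space.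
            ell dual_space (\<subseteq>) x y \<le> enat n \<or> ell dual_space (\<subseteq>) x (zeta dm y) \<le> enat n)"
proof -
  interpret pmalg ps dm by unfold_locales (rule assms(2))
  show ?thesis using lhs_to_rhs rhs_to_lhs assms(1,3) by blast
qed



end
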